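(* Let $(M,g,J,\kappa)$ be an almost Kähler manifold of real dimension $2n$, $o\in M$, and $\{Z_1,\dots,Z_n\}$ a generalized normal holomorphic frame around $o$. Then for all $1\le i,j,r,s\le n$, $$L(Z_{\bar i},Z_j,Z_r,Z_{\bar s})(o)=-2R^J(Z_{\bar i},Z_j,Z_r,Z_{\bar s})(o)+2R(Z_{\bar i},Z_j,Z_r,Z_{\bar s})(o).$$
   Context: An almost Kähler manifold $(M,g,J,\kappa)$: $\kappa$ a symplectic form, $J$ an almost complex structure with $g(\cdot,\cdot)=\kappa(\cdot,J\cdot)$ a $J$-Hermitian Riemannian metric. $\nabla$ is the Levi-Civita connection of $g$, with curvature $R(X,Y,Z,W)=g(\nabla_X\nabla_YZ-\nabla_Y\nabla_XZ-\nabla_{[X,Y]}Z,W)$; everything is extended complex-multilinearly, and $Z_{\bar i}=\overline{Z_i}$. $B(X,Y)=J(\nabla_XJ)Y-(\nabla_{JX}J)Y$, $L(X,Y,Z,W)=g((\nabla_XB)(Y,Z),W)$, and $R^J(X,Y,Z,W)=g\big(\nabla_X(J\nabla_YZ)-\nabla_Y(J\nabla_XZ)-\nabla_{[X,Y]}(JZ),\,JW\big)$. A generalized normal holomorphic frame around $o$ is a local frame $\{Z_1,\dots,Z_n\}$ of $T^{1,0}_JM$ near $o$ such that, writing $\nabla_k=\nabla_{Z_k}$, $\nabla_{\bar k}=\nabla_{Z_{\bar k}}$: (1) $\nabla_kZ_{\bar i}(o)=0$; (2) $\nabla_kZ_i(o)$ is of type $(0,1)$; (3) $G_{r\bar s}:=g(Z_r,Z_{\bar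 s})$ satisfies $G_{r\bar s}(o)=\delta_{rs}$, $dG_{r\bar s}(o)=0$; (4) $\nabla_r\nabla_{\bar k}Z_i(o)=0$, for all indices. *)

theory Defs
  imports "HOL-Analysis.Analysis"
begin

text \<open>Local (chart) rendering: the manifold is replaced by an open set U of coordinates
  in real^'d, tensors are given by component matrices, complexified vector fields are
  maps real^'d => complex^'d.\<close>

definition pd :: "'d::finite \<Rightarrow> (real^'d \<Rightarrow> 'b::real_normed_vector) \<Rightarrow> real^'d \<Rightarrow> 'b" where
  "pd k f x = vector_derivative (\<lambda>t. f (x + t *\<^sub>R axis k 1)) (at 0)"

fun Dl :: "'d::finite list \<Rightarrow> (real^'d \<Rightarrow> 'b::real_normed_vector) \<Rightarrow> real^'d \<Rightarrow> 'b" where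
  "Dl [] f = f"
| "Dl (k # ks) f = pd k (Dl ks f)"

definition smooth_on :: "(real^'d::finite) set \<Rightarrow> (real^'d \<Rightarrow> 'b::real_normed_vector) \<Rightarrow> bool" where
  "smooth_on U f \<longleftrightarrow> (\<forall>ks. continuous_on U (Dl ks f) \<and>
      (\<forall>k. \<forall>x\<in>U. ((\<lambda>t. Dl ks f (x + t *\<^sub>R axis k 1)) has_vector_derivative Dl (k # ks) f x) (at 0)))"

definition cscale :: "complex \<Rightarrow> complex^'d::finite \<Rightarrow> complex^'d" where
  "cscale c v = (\<chi> a. c * v $ a)"

text \<open>Action of a real (1,1)-tensor with components M$a$b (M(\<partial>_b) = \<Sum>_a M$a$b \<partial>_a) on complex vectors.\<close>
definition jv :: "real^'d^'d \<Rightarrow> complex^'d \<Rightarrow> complex^'d::finite" where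
  "jv M v = (\<chi> a. \<Sum>b\<in>UNIV. complex_of_real (M $ a $ b) * v $ b)"

definition Japp :: "(real^'d \<Rightarrow> real^'d^'d) \<Rightarrow> (real^'d \<Rightarrow> complex^'d) \<Rightarrow> real^'d \<Rightarrow> complex^'d::finite" where
  "Japp J Y x = jv (J x) (Y x)"

definition gapp :: "(real^'d \<Rightarrow> real^'d^'d) \<Rightarrow> (real^'d \<Rightarrow> complex^'d) \<Rightarrow> (real^'d \<Rightarrow> complex^'d)
    \<Rightarrow> real^'d \<Rightarrow> complex" where
  "gapp g X Y x = (\<Sum>a\<in>UNIV. \<Sum>b\<in>UNIV. complex_of_real (g x $ a $ b) * X x $ a * Y x $ b)"

definition cconj :: "(real^'d \<Rightarrow> complex^'d::finite) \<Rightarrow> real^'d \<Rightarrow> complex^'d" where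
  "cconj Y x = (\<chi> a. cnj (Y x $ a))"

definition Gam :: "(real^'d \<Rightarrow> real^'d^'d) \<Rightarrow> real^'d \<Rightarrow> 'd::finite \<Rightarrow> 'd \<Rightarrow> 'd \<Rightarrow> real" where
  "Gam g x c a b = (1/2) * (\<Sum>d\<in>UNIV. matrix_inv (g x) $ c $ d *
      (pd a (\<lambda>y. g y $ b $ d) x + pd b (\<lambda>y. g y $ a $ d) x - pd d (\<lambda>y. g y $ a $ b) x))"

definition nabla :: "(real^'d \<Rightarrow> real^'d^'d) \<Rightarrow> (real^'d \<Rightarrow> complex^'d) \<Rightarrow> (real^'d \<Rightarrow> complex^'d)
    \<Rightarrow> real^'d \<Rightarrow> complex^'d::finite" where
  "nabla g X Y x = (\<chi> c. (\<Sum>a\<in>UNIV. X x $ a * pd a (\<lambda>y. Y y $ c) x)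
      + (\<Sum>a\<in>UNIV. \<Sum>b\<in>UNIV. complex_of_real (Gam g x c a b) * X x $ a * Y x $ b))"

definition bracket :: "(real^'d \<Rightarrow> complex^'d) \<Rightarrow> (real^'d \<Rightarrow> complex^'d) \<Rightarrow> real^'d \<Rightarrow> complex^'d::finite" where
  "bracket X Y x = (\<chi> c. \<Sum>a\<in>UNIV. X x $ a * pd a (\<lambda>y. Y y $ c) x - Y x $ a * pd a (\<lambda>y. X y $ c) x)"

definition nablaJ :: "(real^'d \<Rightarrow> real^'d^'d) \<Rightarrow> (real^'d \<Rightarrow> real^'d^'d) \<Rightarrow> (real^'d \<Rightarrow> complex^'d)
    \<Rightarrow> (real^'d \<Rightarrow> complex^'d) \<Rightarrow> real^'d \<Rightarrow> complex^'d::finite" where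
  "nablaJ g J X Y x = nabla g X (Japp J Y) x - Japp J (nabla g X Y) x"

definition Bt :: "(real^'d \<Rightarrow> real^'d^'d) \<Rightarrow> (real^'d \<Rightarrow> real^'d^'d) \<Rightarrow> (real^'d \<Rightarrow> complex^'d)
    \<Rightarrow> (real^'d \<Rightarrow> complex^'d) \<Rightarrow> real^'d \<Rightarrow> complex^'d::finite" where
  "Bt g J X Y x = Japp J (nablaJ g J X Y) x - nablaJ g J (Japp J X) Y x"

definition Lt :: "(real^'d \<Rightarrow> real^'d^'d) \<Rightarrow> (real^'d \<Rightarrow> real^'d^'d) \<Rightarrow> (real^'d \<Rightarrow> complex^'d)
    \<Rightarrow> (real^'d \<Rightarrow> complex^'d) \<Rightarrow> (real^'d \<Rightarrow> complex^'d) \<Rightarrow> (real^'d \<Rightarrow> complex^'d)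
    \<Rightarrow> real^'d \<Rightarrow> complex" where
  "Lt g J X Y Z W x = gapp g (\<lambda>y. nabla g X (Bt g J Y Z) y - Bt g J (nabla g X Y) Z y
      - Bt g J Y (nabla g X Z) y) W x"

definition Rm :: "(real^'d \<Rightarrow> real^'d^'d) \<Rightarrow> (real^'d \<Rightarrow> complex^'d)
    \<Rightarrow> (real^'d \<Rightarrow> complex^'d) \<Rightarrow> (real^'d \<Rightarrow> complex^'d) \<Rightarrow> (real^'d \<Rightarrow> complex^'d::finite)
    \<Rightarrow> real^'d \<Rightarrow> complex" where
  "Rm g X Y Z W x = gapp g (\<lambda>y. nabla g X (nabla g Y Z) y - nabla g Y (nabla g X Z) y
      - nabla g (bracket X Y) Z y) W x"

definition RJ :: "(real^'d \<Rightarrow> real^'d^'d) \<Rightarrow> (real^'d \<Rightarrow> real^'d^'d) \<Rightarrow> (real^'d \<Rightarrow> complex^'d)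
    \<Rightarrow> (real^'d \<Rightarrow> complex^'d) \<Rightarrow> (real^'d \<Rightarrow> complex^'d) \<Rightarrow> (real^'d \<Rightarrow> complex^'d::finite)
    \<Rightarrow> real^'d \<Rightarrow> complex" where
  "RJ g J X Y Z W x = gapp g (\<lambda>y. nabla g X (Japp J (nabla g Y Z)) y
      - nabla g Y (Japp J (nabla g X Z)) y - nabla g (bracket X Y) (Japp J Z) y) (Japp J W) x"

text \<open>Almost Kaehler structure on an open coordinate domain U:
  g$a$b = g(\<partial>_a,\<partial>_b), J$a$b as above, \<kappa>$a$b = \<kappa>(\<partial>_a,\<partial>_b).\<close>
definition almost_kahler :: "(real^'d::finite) set \<Rightarrow> (real^'d \<Rightarrow> real^'d^'d) \<Rightarrow> (real^'d \<Rightarrow> real^'d^'d)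
    \<Rightarrow> (real^'d \<Rightarrow> real^'d^'d) \<Rightarrow> bool" where
  "almost_kahler U g J \<kappa> \<longleftrightarrow> open U \<and> smooth_on U g \<and> smooth_on U J \<and> smooth_on U \<kappa> \<and>
    (\<forall>x\<in>U.
      J x ** J x = - mat 1 \<and>
      (\<forall>a b. g x $ a $ b = g x $ b $ a) \<and>
      (\<forall>v. v \<noteq> 0 \<longrightarrow> (\<Sum>a\<in>UNIV. \<Sum>b\<in>UNIV. g x $ a $ b * v $ a * v $ b) > 0) \<and>
      (\<forall>a b. (\<Sum>c\<in>UNIV. \<Sum>d\<in>UNIV. J x $ c $ a * J x $ d $ b * g x $ c $ d) = g x $ a $ b) \<and>
      (\<forall>a b. \<kappa> x $ a $ b = - \<kappa> x $ b $ a) \<and>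
      det (\<kappa> x) \<noteq> 0 \<and>
      (\<forall>a b c. pd a (\<lambda>y. \<kappa> y $ b $ c) x + pd b (\<lambda>y. \<kappa> y $ c $ a) x
               + pd c (\<lambda>y. \<kappa> y $ a $ b) x = 0) \<and>
      (\<forall>a b. g x $ a $ b = (\<Sum>c\<in>UNIV. \<kappa> x $ a $ c * J x $ c $ b)))"

definition gen_normal_hol_frame :: "(real^'d \<Rightarrow> real^'d^'d) \<Rightarrow> (real^'d \<Rightarrow> real^'d^'d)
    \<Rightarrow> ('n::finite \<Rightarrow> real^'d \<Rightarrow> complex^'d::finite) \<Rightarrow> real^'d \<Rightarrow> (real^'d) set \<Rightarrow> bool" where
  "gen_normal_hol_frame g J Z p V \<longleftrightarrow> open V \<and> p \<in> V \<and> (\<forall>i. smooth_on V (Z i)) \<and>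
    (\<forall>x\<in>V.
      (\<forall>i. jv (J x) (Z i x) = cscale \<i> (Z i x)) \<and>
      (\<forall>c. (\<Sum>i\<in>UNIV. cscale (c i) (Z i x)) = 0 \<longrightarrow> (\<forall>i. c i = 0)) \<and>
      (\<forall>v. jv (J x) v = cscale \<i> v \<longrightarrow> (\<exists>c. v = (\<Sum>i\<in>UNIV. cscale (c i) (Z i x))))) \<and>
    (\<forall>k i. nabla g (Z k) (cconj (Z i)) p = 0) \<and>
    (\<forall>k i. jv (J p) (nabla g (Z k) (Z i) p) = cscale (- \<i>) (nabla g (Z k) (Z i) p)) \<and>
    (\<forall>r s. gapp g (Z r) (cconj (Z s)) p = (if r = s then 1 else 0) \<and>
           (\<forall>a. pd a (gapp g (Z r) (cconj (Z s))) p = 0)) \<and>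
    (\<forall>r k i. nabla g (Z r) (nabla g (cconj (Z k)) (Z i)) p = 0)"

end

theory Submission
  imports Defs
begin

definition ld :: "'d::finite \<Rightarrow> (real^'d \<Rightarrow> 'b::real_normed_vector) \<Rightarrow> real^'d \<Rightarrow> bool" where
  "ld k f x \<longleftrightarrow> (\<lambda>t. f (x + t *\<^sub>R axis k 1)) differentiable (at 0)"

lemma pd_hvd: "ld k f x \<Longrightarrow> ((\<lambda>t. f (x + t *\<^sub>R axis k 1)) has_vector_derivative pd k f x) (at 0)"
  by (simp add: ld_def pd_def vector_derivative_works)

lemma hvd_pd: "((\<lambda>t. f (x + t *\<^sub>R axis k 1)) has_vector_derivative D) (at 0) \<Longrightarrow> pd k f x = D \<and> ld k f x"
  unfolding pd_def ld_def
  using vector_derivative_at vector_derivative_works by (metis differentiableI_vector)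

lemma ld_add: assumes "ld k f x" "ld k h x" shows "ld k (\<lambda>y. f y + h y) x \<and> pd k (\<lambda>y. f y + h y) x = pd k f x + pd k h x"
  using hvd_pd[where f="\<lambda>y. f y + h y", OF has_vector_derivative_add[OF pd_hvd[OF assms(1)] pd_hvd[OF assms(2)]]] by simp

lemma ld_diff: assumes "ld k f x" "ld k h x" shows "ld k (\<lambda>y. f y - h y) x \<and> pd k (\<lambda>y. f y - h y) x = pd k f x - pd k h x"
  using hvd_pd[where f="\<lambda>y. f y - h y", OF has_vector_derivative_diff[OF pd_hvd[OF assms(1)] pd_hvd[OF assms(2)]]] by simp

lemma ld_mult: fixes f h :: "real^'d::finite \<Rightarrow> 'a::real_normed_algebra"
  assumes "ld k f x" "ld k h x" shows "ld k (\<lambda>y. f y * h y) x \<and> pd k (\<lambda>y. f y * h y) x = f x * pd k h x + pd k f x * h x"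
  using hvd_pd[where f="\<lambda>y. f y * h y", OF has_vector_derivative_mult[OF pd_hvd[OF assms(1)] pd_hvd[OF assms(2)]]] by simp

lemma ld_const: "ld k (\<lambda>y. c) x \<and> pd k (\<lambda>y. c) x = 0"
  using hvd_pd[where f="\<lambda>y. c" and x=x and k=k, OF has_vector_derivative_const] by simp

lemma ld_sum: assumes "\<And>i. i \<in> I \<Longrightarrow> ld k (f i) x"
  shows "ld k (\<lambda>y. \<Sum>i\<in>I. f i y) x \<and> pd k (\<lambda>y. \<Sum>i\<in>I. f i y) x = (\<Sum>i\<in>I. pd k (f i) x)"
  proof -
  have "((\<lambda>t. \<Sum>i\<in>I. f i (x + t *\<^sub>R axis k 1)) has_vector_derivative (\<Sum>i\<in>I. pd k (f i) x)) (at 0)"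
    by (rule has_vector_derivative_sum) (rule pd_hvd[OF assms])
  from hvd_pd[where f="\<lambda>y. \<Sum>i\<in>I. f i y", OF this] show ?thesis by simp
qed

lemma ld_lin: assumes "bounded_linear h" "ld k f x"
  shows "ld k (\<lambda>y. h (f y)) x \<and> pd k (\<lambda>y. h (f y)) x = h (pd k f x)"
  using hvd_pd[where f="\<lambda>y. h (f y)", OF bounded_linear.has_vector_derivative[OF assms(1) pd_hvd[OF assms(2)]]] by simp

lemma ld_nth: "ld k f x \<Longrightarrow> ld k (\<lambda>y. f y $ c) x \<and> pd k (\<lambda>y. f y $ c) x = pd k f x $ c"
  using ld_lin[OF bounded_linear_vec_nth] by blast

lemma ld_cnj: "ld k f x \<Longrightarrow> ld k (\<lambda>y. cnj (f y)) x \<and> pd k (\<lambda>y. cnj (f y)) x = cnj (pd k f x)"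
  using ld_lin[OF bounded_linear_cnj] by blast

lemma ld_ofreal: "ld k f x \<Longrightarrow> ld k (\<lambda>y. complex_of_real (f y)) x"
  using ld_lin[OF bounded_linear_of_real] by blast

lemma ld_prod: fixes f :: "'i \<Rightarrow> real^'d::finite \<Rightarrow> real"
  assumes "\<And>i. i \<in> I \<Longrightarrow> ld k (f i) x"
  shows "ld k (\<lambda>y. \<Prod>i\<in>I. f i y) x"
proof -
  have "\<forall>i\<in>I. \<exists>D. ((\<lambda>t. f i (x + t *\<^sub>R axis k 1)) has_derivative D) (at 0)"
    using assms unfolding ld_def differentiable_def by blast
  then obtain D where "\<forall>i\<in>I. ((\<lambda>t. f i (x + t *\<^sub>R axis k 1)) has_derivative D i) (at 0)"
    by (rule bchoice[THEN exE]) blast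
  then have "((\<lambda>t. \<Prod>i\<in>I. f i (x + t *\<^sub>R axis k 1)) has_derivative
      (\<lambda>y. \<Sum>i\<in>I. D i y * (\<Prod>j\<in>I - {i}. f j (x + 0 *\<^sub>R axis k 1)))) (at 0)"
    by (intro has_derivative_prod) blast
  then show ?thesis unfolding ld_def differentiable_def by blast
qed

lemma ld_divide: fixes f h :: "real^'d::finite \<Rightarrow> real"
  assumes "ld k f x" "ld k h x" "h x \<noteq> 0"
  shows "ld k (\<lambda>y. f y / h y) x"
proof -
  have "(\<lambda>t. f (x + t *\<^sub>R axis k 1) / h (x + t *\<^sub>R axis k 1)) differentiable (at 0)"
    by (rule differentiable_divide) (use assms in \<open>simp_all add: ld_def\<close>)
  then show ?thesis unfolding ld_def .
qed

lemma line_open: fixes x :: "real^'d::finite" assumes "open S" "x \<in> S"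
  shows "open {t::real. x + t *\<^sub>R axis k 1 \<in> S} \<and> 0 \<in> {t::real. x + t *\<^sub>R axis k 1 \<in> S}"
proof
  have "continuous_on UNIV (\<lambda>t::real. x + t *\<^sub>R axis k (1::real))"
    by (intro continuous_intros)
  then show "open {t::real. x + t *\<^sub>R axis k 1 \<in> S}"
    using open_vimage[OF assms(1)] by (auto simp: vimage_def)
  show "0 \<in> {t::real. x + t *\<^sub>R axis k 1 \<in> S}" using assms by simp
qed

lemma ld_local: assumes "open S" "x \<in> S" "\<And>y. y \<in> S \<Longrightarrow> f y = h y"
  shows "ld k f x = ld k h x \<and> pd k f x = pd k h x"
proof -
  let ?T = "{t::real. x + t *\<^sub>R axis k 1 \<in> S}"
  have T: "open ?T" "0 \<in> ?T" using line_open[OF assms(1,2), of k] by auto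
  have e1: "\<And>t. t \<in> ?T \<Longrightarrow> f (x + t *\<^sub>R axis k 1) = h (x + t *\<^sub>R axis k 1)" using assms(3) by simp
  have e2: "\<And>t. t \<in> ?T \<Longrightarrow> h (x + t *\<^sub>R axis k 1) = f (x + t *\<^sub>R axis k 1)" using assms(3) by simp
  have eq: "((\<lambda>t. f (x + t *\<^sub>R axis k 1)) has_vector_derivative D) (at 0) \<longleftrightarrow>
            ((\<lambda>t. h (x + t *\<^sub>R axis k 1)) has_vector_derivative D) (at 0)" for D
  proof
    assume "((\<lambda>t. f (x + t *\<^sub>R axis k 1)) has_vector_derivative D) (at 0)"
    from has_vector_derivative_transform_within_open[OF this T e1]
    show "((\<lambda>t. h (x + t *\<^sub>R axis k 1)) has_vector_derivative D) (at 0)" .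
  next
    assume "((\<lambda>t. h (x + t *\<^sub>R axis k 1)) has_vector_derivative D) (at 0)"
    from has_vector_derivative_transform_within_open[OF this T e2]
    show "((\<lambda>t. f (x + t *\<^sub>R axis k 1)) has_vector_derivative D) (at 0)" .
  qed
  have "ld k f x = ld k h x"
  proof
    assume "ld k f x"
    from pd_hvd[OF this] have "((\<lambda>t. h (x + t *\<^sub>R axis k 1)) has_vector_derivative pd k f x) (at 0)" using eq by blast
    from hvd_pd[OF this] show "ld k h x" by blast
  next
    assume "ld k h x"
    from pd_hvd[OF this] have "((\<lambda>t. f (x + t *\<^sub>R axis k 1)) has_vector_derivative pd k h x) (at 0)" using eq by blast
    from hvd_pd[OF this] show "ld k f x" by blast
  qed
  moreover have "pd k f x = pd k h x"
    unfolding pd_def vector_derivative_def using eq by simp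
  ultimately show ?thesis by blast
qed

lemma ld_local_ld: assumes "open S" "x \<in> S" "\<And>y. y \<in> S \<Longrightarrow> f y = h y" "ld k h x"
  shows "ld k f x"
  using ld_local[of S x f h k, OF assms(1,2,3)] assms(4) by blast

lemma pd_local: assumes "open S" "x \<in> S" "\<And>y. y \<in> S \<Longrightarrow> f y = h y"
  shows "pd k f x = pd k h x"
  using ld_local[of S x f h k, OF assms(1,2,3)] by blast

lemma smooth_ld: assumes "smooth_on S f" "x \<in> S"
  shows "ld k (Dl ks f) x"
proof -
  have "((\<lambda>t. Dl ks f (x + t *\<^sub>R axis k 1)) has_vector_derivative Dl (k # ks) f x) (at 0)"
    using assms unfolding smooth_on_def by blast
  from hvd_pd[OF this] show ?thesis by simp
qed

lemma smooth_ld0: assumes "smooth_on S f" "x \<in> S"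
  shows "ld k f x"
  using smooth_ld[OF assms, of k "[]"] by simp

lemma smooth_ld1: assumes "smooth_on S f" "x \<in> S"
  shows "ld k (pd a f) x"
  using smooth_ld[OF assms, of k "[a]"] by simp

lemma ld_nth2: "ld k f x \<Longrightarrow> ld k (\<lambda>y. f y $ c $ d) x \<and> pd k (\<lambda>y. f y $ c $ d) x = pd k f x $ c $ d"
  using ld_nth[of k f x c] ld_nth[of k "\<lambda>y. f y $ c" x d] by simp

lemma ld_det: fixes M :: "real^'d::finite \<Rightarrow> real^'e::finite^'e"
  assumes "\<And>i j. ld k (\<lambda>y. M y $ i $ j) x"
  shows "ld k (\<lambda>y. det (M y)) x"
proof -
  have "ld k (\<lambda>y. of_int (sign q) * (\<Prod>i\<in>UNIV. M y $ i $ q i)) x" for q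
  proof -
    have pr: "ld k (\<lambda>y. \<Prod>i\<in>UNIV. M y $ i $ q i) x" by (rule ld_prod) (rule assms)
    show ?thesis by (rule ld_mult[of k "\<lambda>y. of_int (sign q)" x, OF conjunct1[OF ld_const] pr, THEN conjunct1])
  qed
  then show ?thesis unfolding det_def
    using ld_sum[of "{p. p permutes UNIV}" k "\<lambda>q y. of_int (sign q) * (\<Prod>i\<in>UNIV. M y $ i $ q i)" x] by simp
qed
lemma t1: fixes A :: "real^'d::finite^'d"
  shows "(matrix_inv A *v axis d 1) $ c = matrix_inv A $ c $ d"
proof -
  have "(matrix_inv A *v axis d 1) $ c = (\<Sum>j\<in>UNIV. matrix_inv A $ c $ j * axis d 1 $ j)"
    by (simp only: matrix_vector_mult_def vec_lambda_beta)
  also have "\<dots> = (\<Sum>j\<in>UNIV. if j = d then matrix_inv A $ c $ j else 0)"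
    by (rule sum.cong) (auto simp: axis_def)
  also have "\<dots> = matrix_inv A $ c $ d" by simp
  finally show ?thesis .
qed
lemma t2: fixes A :: "real^'d::finite^'d"
  assumes "det A \<noteq> 0"
  shows "A ** matrix_inv A = mat 1"
proof -
  have "invertible A" using assms by (simp add: invertible_det_nz)
  then obtain A' where "A ** A' = mat 1 \<and> A' ** A = mat 1" unfolding invertible_def by blast
  then show ?thesis unfolding matrix_inv_def by (rule someI2) simp
qed
lemma minv_cramer: fixes A :: "real^'d::finite^'d"
  assumes "det A \<noteq> 0"
  shows "matrix_inv A $ c $ d = det (\<chi> i j. if j = c then axis d 1 $ i else A $ i $ j) / det A"
proof -
  have AB: "A ** matrix_inv A = mat 1" using t2[OF assms] .
  define v where "v = matrix_inv A *v axis d 1"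
  have "A *v v = axis d 1" unfolding v_def
    by (simp add: matrix_vector_mul_assoc AB)
  then have "v = (\<chi> k. det(\<chi> i j. if j=k then axis d 1 $ i else A$i$j) / det A)"
    using cramer[OF assms, of v] by simp
  then have "v $ c = det (\<chi> i j. if j = c then axis d 1 $ i else A $ i $ j) / det A" by simp
  moreover have "v $ c = matrix_inv A $ c $ d"
    unfolding v_def by (rule t1)
  ultimately show ?thesis by simp
qed

lemma gam_ld: assumes "open U" "p \<in> U" "smooth_on U g" "\<And>y. y \<in> U \<Longrightarrow> det (g y) \<noteq> 0"
  shows "ld k (\<lambda>y. Gam g y c a b) p"
proof -
  have ge: "ld k (\<lambda>y. g y $ i $ j) y" if "y \<in> U" for i j y
    using ld_nth2[OF smooth_ld0[OF assms(3) that]] by blast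
  have gd: "ld k (\<lambda>y. pd a' (\<lambda>z. g z $ i $ j) y) p" for a' i j
  proof -
    have "pd a' (\<lambda>z. g z $ i $ j) y = pd a' g y $ i $ j" if "y \<in> U" for y
      using ld_nth2[OF smooth_ld0[OF assms(3) that]] by blast
    moreover have "ld k (\<lambda>y. pd a' g y $ i $ j) p"
      using ld_nth2[OF smooth_ld1[OF assms(3,2)]] by blast
    ultimately show ?thesis by (rule ld_local_ld[OF assms(1,2)])
  qed
  have mi: "ld k (\<lambda>y. matrix_inv (g y) $ c' $ d) p" for c' d
  proof -
    have "matrix_inv (g y) $ c' $ d = det (\<chi> i j. if j = c' then axis d 1 $ i else g y $ i $ j) / det (g y)" if "y \<in> U" for y
      using minv_cramer[OF assms(4)[OF that]] .
    moreover have "ld k (\<lambda>y. det (\<chi> i j. if j = c' then axis d 1 $ i else g y $ i $ j) / det (g y)) p"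
    proof (intro ld_divide ld_det)
      fix i j
      show "ld k (\<lambda>y. (\<chi> i j. if j = c' then axis d 1 $ i else g y $ i $ j) $ i $ j) p"
        using ld_const ge[OF assms(2)] by (cases "j = c'") auto
    next
      fix i j show "ld k (\<lambda>y. g y $ i $ j) p" using ge[OF assms(2)] .
    next
      show "det (g p) \<noteq> 0" using assms by blast
    qed
    ultimately show ?thesis by (rule ld_local_ld[OF assms(1,2)])
  qed
  have t: "ld k (\<lambda>y. matrix_inv (g y) $ c $ d * (pd a (\<lambda>y. g y $ b $ d) y + pd b (\<lambda>y. g y $ a $ d) y - pd d (\<lambda>y. g y $ a $ b) y)) p" for d
    using ld_mult[OF mi ld_diff[OF ld_add[OF gd gd, THEN conjunct1] gd, THEN conjunct1], THEN conjunct1] .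
  have "ld k (\<lambda>y. \<Sum>d\<in>UNIV. matrix_inv (g y) $ c $ d * (pd a (\<lambda>y. g y $ b $ d) y + pd b (\<lambda>y. g y $ a $ d) y - pd d (\<lambda>y. g y $ a $ b) y)) p"
    by (rule ld_sum[THEN conjunct1]) (rule t)
  from ld_mult[OF conjunct1[OF ld_const] this, THEN conjunct1, of "1/2"]
  show ?thesis unfolding Gam_def .
qed

definition fld :: "(real^'d::finite) set \<Rightarrow> (real^'d \<Rightarrow> complex^'d) \<Rightarrow> bool" where
  "fld S A \<longleftrightarrow> (\<forall>y\<in>S. \<forall>k c. ld k (\<lambda>z. A z $ c) y)"

definition fld2 :: "(real^'d::finite) set \<Rightarrow> (real^'d \<Rightarrow> complex^'d) \<Rightarrow> real^'d \<Rightarrow> bool" where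
  "fld2 S A p \<longleftrightarrow> fld S A \<and> (\<forall>a c k. ld k (\<lambda>y. pd a (\<lambda>z. A z $ c) y) p)"

lemma smooth_fld2: assumes "open V" "p \<in> V" "smooth_on V A"
  shows "fld2 V A p"
proof -
  have f: "fld V A" unfolding fld_def
    using ld_nth[OF smooth_ld0[OF assms(3)]] by blast
  have "ld k (\<lambda>y. pd a (\<lambda>z. A z $ c) y) p" for a c k
  proof -
    have "pd a (\<lambda>z. A z $ c) y = pd a A y $ c" if "y \<in> V" for y
      using ld_nth[OF smooth_ld0[OF assms(3) that]] by blast
    moreover have "ld k (\<lambda>y. pd a A y $ c) p"
      using ld_nth[OF smooth_ld1[OF assms(3,2)]] by blast
    ultimately show ?thesis by (rule ld_local_ld[OF assms(1,2)])
  qed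
  with f show ?thesis unfolding fld2_def by blast
qed

lemma cconj_nth[simp]: "cconj A z $ c = cnj (A z $ c)"
  by (simp add: cconj_def)

lemma cconj_cconj[simp]: "cconj (cconj A) = A"
  by (simp add: cconj_def vec_eq_iff fun_eq_iff)

lemma cconj_fld2: assumes "open V" "p \<in> V" "fld2 V A p"
  shows "fld2 V (cconj A) p"
proof -
  have f: "fld V (cconj A)" unfolding fld_def
  proof (intro ballI allI)
    fix y k c assume "y \<in> V"
    then have "ld k (\<lambda>z. A z $ c) y" using assms(3) unfolding fld2_def fld_def by blast
    then show "ld k (\<lambda>z. cconj A z $ c) y" using ld_cnj[of k "\<lambda>z. A z $ c" y] by simp
  qed
  have "ld k (\<lambda>y. pd a (\<lambda>z. cconj A z $ c) y) p" for a c k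
  proof -
    have "pd a (\<lambda>z. cconj A z $ c) y = cnj (pd a (\<lambda>z. A z $ c) y)" if "y \<in> V" for y
      using ld_cnj[of a "\<lambda>z. A z $ c" y] assms(3) that unfolding fld2_def fld_def by simp
    moreover have "ld k (\<lambda>y. cnj (pd a (\<lambda>z. A z $ c) y)) p"
      using ld_cnj assms(3) unfolding fld2_def by blast
    ultimately show ?thesis by (rule ld_local_ld[OF assms(1,2)])
  qed
  with f show ?thesis unfolding fld2_def by blast
qed

lemma nabla_comp: "nabla g A B x $ c = (\<Sum>a\<in>UNIV. A x $ a * pd a (\<lambda>y. B y $ c) x)
      + (\<Sum>a\<in>UNIV. \<Sum>b\<in>UNIV. complex_of_real (Gam g x c a b) * A x $ a * B x $ b)"
  by (simp add: nabla_def)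

lemma japp_comp: "Japp J P x $ c = (\<Sum>b\<in>UNIV. complex_of_real (J x $ c $ b) * P x $ b)"
  by (simp add: Japp_def jv_def)

lemma nabla_ld: assumes "fld V A" "fld2 V B p" "p \<in> V" "\<And>c a b. ld k (\<lambda>y. Gam g y c a b) p"
  shows "ld k (\<lambda>y. nabla g A B y $ c) p"
proof -
  have A: "ld k (\<lambda>y. A y $ a) p" for a using assms(1,3) unfolding fld_def by blast
  have B: "ld k (\<lambda>y. B y $ a) p" for a using assms(2,3) unfolding fld2_def fld_def by blast
  have dB: "ld k (\<lambda>y. pd a (\<lambda>z. B z $ c) y) p" for a using assms(2) unfolding fld2_def by blast
  have G: "ld k (\<lambda>y. complex_of_real (Gam g y c a b)) p" for a b using ld_ofreal[OF assms(4)] .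
  have s1: "ld k (\<lambda>y. \<Sum>a\<in>UNIV. A y $ a * pd a (\<lambda>z. B z $ c) y) p"
    by (rule ld_sum[THEN conjunct1], rule ld_mult[OF A dB, THEN conjunct1])
  have s2: "ld k (\<lambda>y. \<Sum>a\<in>UNIV. \<Sum>b\<in>UNIV. complex_of_real (Gam g y c a b) * A y $ a * B y $ b) p"
    by (rule ld_sum[THEN conjunct1], rule ld_sum[THEN conjunct1],
        rule ld_mult[OF ld_mult[OF G A, THEN conjunct1] B, THEN conjunct1])
  show ?thesis unfolding nabla_comp using ld_add[OF s1 s2] by blast
qed

lemma japp_ld: assumes "\<And>c b. ld k (\<lambda>y. J y $ c $ b) p" "\<And>b. ld k (\<lambda>y. P y $ b) p"
  shows "ld k (\<lambda>y. Japp J P y $ c) p"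
  unfolding japp_comp
  by (rule ld_sum[THEN conjunct1], rule ld_mult[OF ld_ofreal[OF assms(1)] assms(2), THEN conjunct1])

lemma nabla0: "A x = 0 \<Longrightarrow> nabla g A B x = 0"
  by (simp add: nabla_def vec_eq_iff)

lemma nabla_scal: "A x = cscale s (A' x) \<Longrightarrow> nabla g A B x = cscale s (nabla g A' B x)"
  by (simp add: nabla_def vec_eq_iff cscale_def sum_distrib_left algebra_simps)

lemma jv0[simp]: "jv M 0 = 0"
  by (simp add: jv_def vec_eq_iff)

lemma nabla_J: assumes "Q p = 0" "\<And>a b. ld a (\<lambda>y. Q y $ b) p" "\<And>a c b. ld a (\<lambda>y. J y $ c $ b) p"
  shows "nabla g A (Japp J Q) p = jv (J p) (nabla g A Q p)"
proof -
  have Q0: "Q p $ b = 0" for b using assms(1) by simp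
  have d: "pd a (\<lambda>y. Japp J Q y $ c) p = (\<Sum>b\<in>UNIV. complex_of_real (J p $ c $ b) * pd a (\<lambda>y. Q y $ b) p)" for a c
  proof -
    have m: "pd a (\<lambda>y. complex_of_real (J y $ c $ b) * Q y $ b) p = complex_of_real (J p $ c $ b) * pd a (\<lambda>y. Q y $ b) p" for b
      using ld_mult[OF ld_ofreal[OF assms(3)] assms(2), of a c b, THEN conjunct2] unfolding Q0 by simp
    have s: "pd a (\<lambda>y. \<Sum>b\<in>UNIV. complex_of_real (J y $ c $ b) * Q y $ b) p
        = (\<Sum>b\<in>UNIV. pd a (\<lambda>y. complex_of_real (J y $ c $ b) * Q y $ b) p)"
      by (rule ld_sum[THEN conjunct2]) (rule ld_mult[OF ld_ofreal[OF assms(3)] assms(2), THEN conjunct1])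
    show ?thesis unfolding japp_comp s m ..
  qed
  have JQ: "Japp J Q p $ b = 0" for b using assms(1) by (simp add: Japp_def)
  show ?thesis
    unfolding vec_eq_iff
  proof
    fix c
    have "nabla g A (Japp J Q) p $ c = (\<Sum>a\<in>UNIV. A p $ a * (\<Sum>b\<in>UNIV. complex_of_real (J p $ c $ b) * pd a (\<lambda>y. Q y $ b) p))"
      unfolding nabla_comp d JQ by simp
    also have "\<dots> = (\<Sum>a\<in>UNIV. \<Sum>b\<in>UNIV. complex_of_real (J p $ c $ b) * (A p $ a * pd a (\<lambda>y. Q y $ b) p))"
      by (simp only: sum_distrib_left mult.left_commute)
    also have "\<dots> = (\<Sum>b\<in>UNIV. \<Sum>a\<in>UNIV. complex_of_real (J p $ c $ b) * (A p $ a * pd a (\<lambda>y. Q y $ b) p))"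
      by (rule sum.swap)
    also have "\<dots> = (\<Sum>b\<in>UNIV. complex_of_real (J p $ c $ b) * (\<Sum>a\<in>UNIV. A p $ a * pd a (\<lambda>y. Q y $ b) p))"
      by (simp only: sum_distrib_left)
    also have "\<dots> = jv (J p) (nabla g A Q p) $ c"
      unfolding jv_def nabla_comp Q0 by simp
    finally show "nabla g A (Japp J Q) p $ c = jv (J p) (nabla g A Q p) $ c" .
  qed
qed

lemma detJ: fixes M :: "real^'d::finite^'d" assumes "M ** M = - mat 1" shows "det M \<noteq> 0"
proof -
  have "M ** (-M) = - (M ** M)" by (simp add: matrix_matrix_mult_def vec_eq_iff sum_negf)
  also have "\<dots> = mat 1" using assms by simp
  finally have a: "M ** (-M) = mat 1" .
  have "(-M) ** M = - (M ** M)" by (simp add: matrix_matrix_mult_def vec_eq_iff sum_negf)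
  also have "\<dots> = mat 1" using assms by simp
  finally have "(-M) ** M = mat 1" .
  with a have "invertible M" unfolding invertible_def by blast
  then show ?thesis using invertible_det_nz by blast
qed

lemma detg: fixes G K M :: "real^'d::finite^'d"
  assumes "M ** M = - mat 1" "det K \<noteq> 0" "\<forall>a b. G $ a $ b = (\<Sum>c\<in>UNIV. K $ a $ c * M $ c $ b)"
  shows "det G \<noteq> 0"
proof -
  have "G = K ** M" using assms(3) by (simp add: matrix_matrix_mult_def vec_eq_iff)
  then show ?thesis using det_mul[of K M] detJ[OF assms(1)] assms(2) by simp
qed

lemma jv_JJ: fixes M :: "real^'d::finite^'d" assumes "M ** M = - mat 1"
  shows "jv M (jv M v) = - v"
proof -
  have e: "(\<Sum>b\<in>UNIV. M $ a $ b * M $ b $ e) = (if a = e then -1 else 0)" for a e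
  proof -
    have "(M ** M) $ a $ e = (\<Sum>b\<in>UNIV. M $ a $ b * M $ b $ e)" by (simp add: matrix_matrix_mult_def)
    moreover have "(M ** M) $ a $ e = (- mat 1 :: real^'d^'d) $ a $ e" using assms by simp
    moreover have "(- mat 1 :: real^'d^'d) $ a $ e = (if a = e then -1 else 0)" by (simp add: mat_def)
    ultimately show ?thesis by simp
  qed
  show ?thesis unfolding vec_eq_iff
  proof
    fix a
    have "jv M (jv M v) $ a = (\<Sum>b\<in>UNIV. \<Sum>e\<in>UNIV. complex_of_real (M $ a $ b * M $ b $ e) * v $ e)"
      by (simp add: jv_def sum_distrib_left mult.assoc)
    also have "\<dots> = (\<Sum>e\<in>UNIV. complex_of_real (\<Sum>b\<in>UNIV. M $ a $ b * M $ b $ e) * v $ e)"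
      by (subst sum.swap) (simp add: sum_distrib_right)
    also have "\<dots> = (\<Sum>e\<in>UNIV. (if a = e then - v $ e else 0))"
      unfolding e by (rule sum.cong) auto
    also have "\<dots> = - v $ a" by simp
    finally show "jv M (jv M v) $ a = (- v) $ a" by simp
  qed
qed

lemma jv_diff: "jv M (v - w) = jv M v - jv M w"
  by (simp add: jv_def vec_eq_iff algebra_simps sum_subtractf)

lemma jv_cscale: "jv M (cscale s v) = cscale s (jv M v)"
  by (simp add: jv_def cscale_def vec_eq_iff sum_distrib_left algebra_simps)

lemma bt_alg: fixes M :: "real^'d::finite^'d" assumes "M ** M = - mat 1"
  shows "jv M (cscale \<i> v - jv M v) - (cscale \<i> (cscale \<i> v) - jv M (cscale \<i> v))
     = (\<chi> c. 2 * v $ c + 2 * \<i> * jv M v $ c)"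
  unfolding jv_diff jv_cscale jv_JJ[OF assms]
  by (simp add: vec_eq_iff cscale_def algebra_simps)

lemma nabla_conj: assumes "\<And>a c. ld a (\<lambda>y. B y $ c) p"
  shows "nabla g (cconj A) (cconj B) p = cconj (nabla g A B) p"
proof -
  have d: "pd a (\<lambda>y. cnj (B y $ c)) p = cnj (pd a (\<lambda>y. B y $ c) p)" for a c
    using ld_cnj[OF assms, of a c] by simp
  show ?thesis unfolding vec_eq_iff
    by (simp add: nabla_comp d cconj_def)
qed

lemma gam_sym: assumes "open U" "p \<in> U" "\<And>y a b. y \<in> U \<Longrightarrow> g y $ a $ b = g y $ b $ a"
  shows "Gam g p c a b = Gam g p c b a"
proof -
  have "pd d (\<lambda>y. g y $ a $ b) p = pd d (\<lambda>y. g y $ b $ a) p" for d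
    by (rule pd_local[OF assms(1,2)]) (rule assms(3))
  then show ?thesis unfolding Gam_def by (simp add: algebra_simps)
qed

lemma bracket0: assumes "nabla g X Y p = 0" "nabla g Y X p = 0"
   "\<And>c a b. Gam g p c a b = Gam g p c b a"
  shows "bracket X Y p = 0"
proof -
  have "bracket X Y p $ c = 0" for c
  proof -
    let ?G = "\<lambda>a b. complex_of_real (Gam g p c a b)"
    have 1: "(\<Sum>a\<in>UNIV. X p $ a * pd a (\<lambda>y. Y y $ c) p) + (\<Sum>a\<in>UNIV. \<Sum>b\<in>UNIV. ?G a b * X p $ a * Y p $ b) = 0"
      using assms(1) unfolding vec_eq_iff nabla_comp by simp
    have 2: "(\<Sum>a\<in>UNIV. Y p $ a * pd a (\<lambda>y. X y $ c) p) + (\<Sum>a\<in>UNIV. \<Sum>b\<in>UNIV. ?G a b * Y p $ a * X p $ b) = 0"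
      using assms(2) unfolding vec_eq_iff nabla_comp by simp
    have "(\<Sum>a\<in>UNIV. \<Sum>b\<in>UNIV. ?G a b * Y p $ a * X p $ b) = (\<Sum>b\<in>UNIV. \<Sum>a\<in>UNIV. ?G a b * Y p $ a * X p $ b)"
      by (rule sum.swap)
    also have "\<dots> = (\<Sum>b\<in>UNIV. \<Sum>a\<in>UNIV. ?G b a * X p $ b * Y p $ a)"
      using assms(3) by (simp add: mult_ac)
    finally have 3: "(\<Sum>a\<in>UNIV. \<Sum>b\<in>UNIV. ?G a b * Y p $ a * X p $ b) = (\<Sum>a\<in>UNIV. \<Sum>b\<in>UNIV. ?G a b * X p $ a * Y p $ b)" .
    have "bracket X Y p $ c = (\<Sum>a\<in>UNIV. X p $ a * pd a (\<lambda>y. Y y $ c) p) - (\<Sum>a\<in>UNIV. Y p $ a * pd a (\<lambda>y. X y $ c) p)"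
      by (simp add: bracket_def sum_subtractf)
    moreover have "(\<Sum>a\<in>UNIV. X p $ a * pd a (\<lambda>y. Y y $ c) p) = - (\<Sum>a\<in>UNIV. \<Sum>b\<in>UNIV. ?G a b * X p $ a * Y p $ b)"
      using 1 by (simp add: eq_neg_iff_add_eq_0)
    moreover have "(\<Sum>a\<in>UNIV. Y p $ a * pd a (\<lambda>y. X y $ c) p) = - (\<Sum>a\<in>UNIV. \<Sum>b\<in>UNIV. ?G a b * X p $ a * Y p $ b)"
      using 2 unfolding 3 by (simp add: eq_neg_iff_add_eq_0)
    ultimately show ?thesis by simp
  qed
  then show ?thesis by (simp add: vec_eq_iff)
qed

lemma final_alg: fixes G :: "'d::finite \<Rightarrow> 'd \<Rightarrow> complex"
  shows "(\<Sum>a\<in>UNIV. \<Sum>b\<in>UNIV. G a b * (2 * A a + 2 * \<i> * B a) * w b) =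
    - 2 * (\<Sum>a\<in>UNIV. \<Sum>b\<in>UNIV. G a b * B a * (- \<i> * w b)) + 2 * (\<Sum>a\<in>UNIV. \<Sum>b\<in>UNIV. G a b * A a * w b)"
  by (simp add: sum_distrib_left sum.distrib algebra_simps sum_negf)

lemma ld_cmul: fixes f :: "real^'d::finite \<Rightarrow> 'a::real_normed_algebra"
  assumes "ld k f x" shows "ld k (\<lambda>y. c * f y) x \<and> pd k (\<lambda>y. c * f y) x = c * pd k f x"
  using ld_lin[OF bounded_linear_mult_right assms] .

lemma nabla_hol: assumes "open V" "y \<in> V" "\<And>z. z \<in> V \<Longrightarrow> Japp J Zr z = cscale \<i> (Zr z)"
   "\<And>a c. ld a (\<lambda>z. Zr z $ c) y"
  shows "nabla g A (Japp J Zr) y = cscale \<i> (nabla g A Zr y)"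
proof -
  have d: "pd a (\<lambda>z. Japp J Zr z $ c) y = \<i> * pd a (\<lambda>z. Zr z $ c) y" for a c
  proof -
    have "pd a (\<lambda>z. Japp J Zr z $ c) y = pd a (\<lambda>z. \<i> * Zr z $ c) y"
      by (rule pd_local[OF assms(1,2)]) (simp add: assms(3) cscale_def)
    also have "\<dots> = \<i> * pd a (\<lambda>z. Zr z $ c) y"
      using ld_cmul[OF assms(4)] by blast
    finally show ?thesis .
  qed
  have v: "Japp J Zr y $ b = \<i> * Zr y $ b" for b using assms(3)[OF assms(2)] by (simp add: cscale_def)
  show ?thesis unfolding vec_eq_iff
    by (simp add: nabla_comp d v cscale_def sum_distrib_left algebra_simps)
qed

lemma nabla_lin2: assumes "open V" "p \<in> V" "\<And>y. y \<in> V \<Longrightarrow> F y = (\<chi> c. \<alpha> * P y $ c + \<beta> * R y $ c)"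
  "\<And>a c. ld a (\<lambda>y. P y $ c) p" "\<And>a c. ld a (\<lambda>y. R y $ c) p"
  shows "nabla g A F p = (\<chi> c. \<alpha> * nabla g A P p $ c + \<beta> * nabla g A R p $ c)"
proof -
  have d: "pd a (\<lambda>y. F y $ c) p = \<alpha> * pd a (\<lambda>y. P y $ c) p + \<beta> * pd a (\<lambda>y. R y $ c) p" for a c
  proof -
    have "pd a (\<lambda>y. F y $ c) p = pd a (\<lambda>y. \<alpha> * P y $ c + \<beta> * R y $ c) p"
      by (rule pd_local[OF assms(1,2)]) (simp add: assms(3))
    also have "\<dots> = \<alpha> * pd a (\<lambda>y. P y $ c) p + \<beta> * pd a (\<lambda>y. R y $ c) p"
    proof -
      have m1: "ld a (\<lambda>y. \<alpha> * P y $ c) p \<and> pd a (\<lambda>y. \<alpha> * P y $ c) p = \<alpha> * pd a (\<lambda>y. P y $ c) p"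
        using ld_cmul[OF assms(4)] by blast
      have m2: "ld a (\<lambda>y. \<beta> * R y $ c) p \<and> pd a (\<lambda>y. \<beta> * R y $ c) p = \<beta> * pd a (\<lambda>y. R y $ c) p"
        using ld_cmul[OF assms(5)] by blast
      show ?thesis using ld_add[OF m1[THEN conjunct1] m2[THEN conjunct1]] m1 m2 by simp
    qed
    finally show ?thesis .
  qed
  have v: "F p $ b = \<alpha> * P p $ b + \<beta> * R p $ b" for b using assms(3)[OF assms(2)] by simp
  show ?thesis unfolding vec_eq_iff
    by (simp add: nabla_comp d v sum_distrib_left sum.distrib algebra_simps)
qed

theorem mainTheorem5:
  fixes g J \<kappa> :: "real^'d::finite \<Rightarrow> real^'d^'d"
    and Z :: "'n::finite \<Rightarrow> real^'d \<Rightarrow> complex^'d"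
    and U V :: "(real^'d) set" and p :: "real^'d"
  assumes "CARD('d) = 2 * CARD('n)"
    and "almost_kahler U g J \<kappa>"
    and "V \<subseteq> U"
    and "gen_normal_hol_frame g J Z p V"
  shows "\<forall>i j r s.
    Lt g J (cconj (Z i)) (Z j) (Z r) (cconj (Z s)) p =
      - 2 * RJ g J (cconj (Z i)) (Z j) (Z r) (cconj (Z s)) p
      + 2 * Rm g (cconj (Z i)) (Z j) (Z r) (cconj (Z s)) p"
proof (intro allI)
  fix i j r s
  have oU: "open U" and sg: "smooth_on U g" and sJ: "smooth_on U J"
    using assms(2) unfolding almost_kahler_def by blast+
  have JJ: "\<And>x. x \<in> U \<Longrightarrow> J x ** J x = - mat 1"
    using assms(2) unfolding almost_kahler_def by blast
  have gsym: "\<And>x a b. x \<in> U \<Longrightarrow> g x $ a $ b = g x $ b $ a"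
    using assms(2) unfolding almost_kahler_def by blast
  have dk: "\<And>x. x \<in> U \<Longrightarrow> det (\<kappa> x) \<noteq> 0"
    using assms(2) unfolding almost_kahler_def by blast
  have gk: "\<And>x. x \<in> U \<Longrightarrow> \<forall>a b. g x $ a $ b = (\<Sum>c\<in>UNIV. \<kappa> x $ a $ c * J x $ c $ b)"
    using assms(2) unfolding almost_kahler_def by blast
  have oV: "open V" and pV: "p \<in> V" and sZ: "\<And>i. smooth_on V (Z i)"
    using assms(4) unfolding gen_normal_hol_frame_def by blast+
  have hol: "\<And>x i. x \<in> V \<Longrightarrow> jv (J x) (Z i x) = cscale \<i> (Z i x)"
    using assms(4) unfolding gen_normal_hol_frame_def by blast
  have c1: "\<And>k i. nabla g (Z k) (cconj (Z i)) p = 0"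
    using assms(4) unfolding gen_normal_hol_frame_def by blast
  have c4: "\<And>r k i. nabla g (Z r) (nabla g (cconj (Z k)) (Z i)) p = 0"
    using assms(4) unfolding gen_normal_hol_frame_def by blast
  have pU: "p \<in> U" using pV assms(3) by blast
  have detg: "\<And>y. y \<in> U \<Longrightarrow> det (g y) \<noteq> 0"
    using detg[OF JJ dk gk] by blast
  have GL: "\<And>k c a b. ld k (\<lambda>y. Gam g y c a b) p"
    using gam_ld[OF oU pU sg detg] by blast
  have JL: "\<And>a c b. ld a (\<lambda>y. J y $ c $ b) p"
    using ld_nth2[OF smooth_ld0[OF sJ pU]] by blast
  have f2: "\<And>i. fld2 V (Z i) p" using smooth_fld2[OF oV pV sZ] .
  have cf2: "\<And>i. fld2 V (cconj (Z i)) p" using cconj_fld2[OF oV pV f2] .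
  have f1: "\<And>i. fld V (Z i)" using f2 unfolding fld2_def by blast
  have cf1: "\<And>i. fld V (cconj (Z i))" using cf2 unfolding fld2_def by blast
  have ZL: "\<And>i y a c. y \<in> V \<Longrightarrow> ld a (\<lambda>z. Z i z $ c) y" using f1 unfolding fld_def by blast
  have cZL: "\<And>i a c. ld a (\<lambda>z. cconj (Z i) z $ c) p" using cf1 pV unfolding fld_def by blast

  define X where "X = cconj (Z i)"
  define Y where "Y = Z j"
  define Zr where "Zr = Z r"
  define W where "W = cconj (Z s)"
  define P where "P = nabla g Y Zr"
  define Q where "Q = nabla g X Zr"
  define S where "S = nabla g X Y"

  have PL: "\<And>a c. ld a (\<lambda>y. P y $ c) p" unfolding P_def Y_def Zr_def
    by (rule nabla_ld[OF f1 f2 pV GL])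
  have QL: "\<And>a c. ld a (\<lambda>y. Q y $ c) p" unfolding Q_def X_def Zr_def
    by (rule nabla_ld[OF cf1 f2 pV GL])
  have JPL: "\<And>a c. ld a (\<lambda>y. Japp J P y $ c) p"
    by (rule japp_ld[OF JL PL])

  have conj0: "nabla g (cconj (Z a)) (Z b) p = 0" for a b
  proof -
    have "nabla g (cconj (Z a)) (cconj (cconj (Z b))) p = cconj (nabla g (Z a) (cconj (Z b))) p"
      by (rule nabla_conj) (rule cZL)
    then show ?thesis using c1[of a b] by (simp add: cconj_def vec_eq_iff)
  qed
  have S0: "S p = 0" unfolding S_def X_def Y_def by (rule conj0)
  have Q0: "Q p = 0" unfolding Q_def X_def Zr_def by (rule conj0)
  have YX0: "nabla g Y X p = 0" unfolding Y_def X_def by (rule c1)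
  have YQ0: "nabla g Y Q p = 0" unfolding Y_def Q_def X_def Zr_def by (rule c4)
  have gs: "\<And>c a b. Gam g p c a b = Gam g p c b a" using gam_sym[of U p g, OF oU pU gsym] by blast
  have br0: "bracket X Y p = 0" using bracket0[OF S0[unfolded S_def] YX0 gs] .

  have eR: "Rm g X Y Zr W p = (\<Sum>a\<in>UNIV. \<Sum>b\<in>UNIV. complex_of_real (g p $ a $ b) * nabla g X P p $ a * W p $ b)"
    unfolding Rm_def gapp_def P_def[symmetric] Q_def[symmetric] YQ0 nabla0[of "bracket X Y" p, OF br0] by simp

  have nJQ: "nabla g A (Japp J Q) p = 0" if "nabla g A Q p = 0" for A
    using nabla_J[OF Q0 QL JL, of g A] that by simp
  have JW: "Japp J W p $ b = - \<i> * W p $ b" for b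
  proof -
    have "Japp J W p $ b = cnj (jv (J p) (Z s p) $ b)"
      unfolding W_def Japp_def by (simp add: jv_def cconj_def)
    also have "\<dots> = - \<i> * W p $ b" unfolding hol[OF pV] W_def by (simp add: cscale_def)
    finally show ?thesis .
  qed
  have eJ: "RJ g J X Y Zr W p = (\<Sum>a\<in>UNIV. \<Sum>b\<in>UNIV. complex_of_real (g p $ a $ b) * nabla g X (Japp J P) p $ a * (- \<i> * W p $ b))"
    unfolding RJ_def gapp_def P_def[symmetric] Q_def[symmetric] nJQ[OF YQ0] nabla0[of "bracket X Y" p, OF br0] JW by simp

  have BtS: "Bt g J S Zr p = 0"
  proof -
    have JS: "Japp J S p = 0" using S0 by (simp add: Japp_def)
    show ?thesis unfolding Bt_def nablaJ_def Japp_def[of J "\<lambda>y. _ y - _ y"]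
      by (simp add: nabla0[of S p, OF S0] nabla0[of "Japp J S" p, OF JS] Japp_def)
  qed
  have BtQ: "Bt g J Y Q p = 0"
  proof -
    have n: "nablaJ g J A Q p = 0" for A
      unfolding nablaJ_def using nabla_J[OF Q0 QL JL, of g A] by (simp add: Japp_def)
    show ?thesis unfolding Bt_def Japp_def[of J "nablaJ g J Y Q"] n by simp
  qed
  have BtYZ: "Bt g J Y Zr y = (\<chi> c. 2 * P y $ c + 2 * \<i> * Japp J P y $ c)" if yV: "y \<in> V" for y
  proof -
    have yU: "y \<in> U" using yV assms(3) by blast
    have hZ: "\<And>z. z \<in> V \<Longrightarrow> Japp J Zr z = cscale \<i> (Zr z)" unfolding Japp_def Zr_def by (rule hol)
    have hY: "Japp J Y y = cscale \<i> (Y y)" unfolding Japp_def Y_def by (rule hol[OF yV])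
    have ZLy: "\<And>a c. ld a (\<lambda>z. Zr z $ c) y" unfolding Zr_def using ZL[OF yV] .
    have nh: "nabla g A (Japp J Zr) y = cscale \<i> (nabla g A Zr y)" for A
      using nabla_hol[OF oV yV hZ ZLy] .
    have "Bt g J Y Zr y = jv (J y) (cscale \<i> (P y) - jv (J y) (P y)) - (cscale \<i> (cscale \<i> (P y)) - jv (J y) (cscale \<i> (P y)))"
      unfolding Bt_def nablaJ_def Japp_def[of J "\<lambda>y. _ y - _ y"] Japp_def[of J "nabla g _ _"]
        nabla_scal[of "Japp J Y" y "\<i>" Y, OF hY] nh P_def by (simp add: Japp_def)
    also have "\<dots> = (\<chi> c. 2 * P y $ c + 2 * \<i> * jv (J y) (P y) $ c)" by (rule bt_alg[OF JJ[OF yU]])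
    finally show ?thesis by (simp add: Japp_def)
  qed
  have nB: "nabla g X (Bt g J Y Zr) p = (\<chi> c. 2 * nabla g X P p $ c + 2 * \<i> * nabla g X (Japp J P) p $ c)"
    by (rule nabla_lin2[OF oV pV BtYZ PL JPL])
  have eL: "Lt g J X Y Zr W p = (\<Sum>a\<in>UNIV. \<Sum>b\<in>UNIV. complex_of_real (g p $ a $ b) *
        (2 * nabla g X P p $ a + 2 * \<i> * nabla g X (Japp J P) p $ a) * W p $ b)"
    unfolding Lt_def gapp_def S_def[symmetric] Q_def[symmetric] BtS BtQ nB by simp

  have "Lt g J X Y Zr W p = - 2 * RJ g J X Y Zr W p + 2 * Rm g X Y Zr W p"
    unfolding eL eJ eR by (rule final_alg)
  then show "Lt g J (cconj (Z i)) (Z j) (Z r) (cconj (Z s)) p =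
      - 2 * RJ g J (cconj (Z i)) (Z j) (Z r) (cconj (Z s)) p
      + 2 * Rm g (cconj (Z i)) (Z j) (Z r) (cconj (Z s)) p"
    unfolding X_def Y_def Zr_def W_def .
qed

end
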